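(* For each real number $\epsilon>0$ and each integer $m\ge 3$ there is a positive integer $n$ and a subset $S\subseteq\mathbb{Z}/n\mathbb{Z}$ with $|S|\ge(1-\epsilon)n$ such that $S$ is simultaneously $(k,j)$-product-free for all positive integers $k>j$ with $k+j\le m$.
   Context: For positive integers $k,j$, a subset $S\subseteq\mathbb{Z}/n\mathbb{Z}$ is called $(k,j)$-product-free if there is no solution of $a_1a_2\cdots a_k\equiv b_1b_2\cdots b_j\pmod n$ with all $a_1,\dots,a_k,b_1,\dots,b_j\in S$ (not necessarily distinct). *)

theory Defs
  imports Complex_Main
begin

text \<open>Z/nZ is represented by residues {0..<n} (natural numbers); congruence mod n
is compared via mod n.\<close>

definition product_free :: "nat \<Rightarrow> nat \<Rightarrow> nat \<Rightarrow> nat set \<Rightarrow> bool" where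
  "product_free n k j S \<longleftrightarrow>
     (\<forall>as bs. length as = k \<longrightarrow> length bs = j \<longrightarrow> set as \<subseteq> S \<longrightarrow> set bs \<subseteq> S \<longrightarrow>
        prod_list as mod n \<noteq> prod_list bs mod n)"

end

theory Submission imports Defs "HOL-Analysis.Analysis" "HOL-Computational_Algebra.Primes" begin


lemma nat_prod_pf:
  fixes n N :: nat
  assumes "1 \<le> n" "n \<le> N"
  shows "n = (\<Prod>p\<in>{p. prime p \<and> p \<le> N}. p ^ multiplicity p n)"
proof -
  have fin: "finite {p. prime p \<and> p \<le> N}" by simp
  have sub: "prime_factors n \<subseteq> {p. prime p \<and> p \<le> N}"
  proof
    fix p assume "p \<in> prime_factors n"
    then have "prime p" "p dvd n" by (auto simp: in_prime_factors_iff)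
    then have "p \<le> n" using assms dvd_imp_le by auto
    then show "p \<in> {p. prime p \<and> p \<le> N}" using \<open>prime p\<close> assms by auto
  qed
  have "n = (\<Prod>p\<in>prime_factors n. p ^ multiplicity p n)"
    using prod_prime_factors[of n] assms by simp
  also have "\<dots> = (\<Prod>p\<in>{p. prime p \<and> p \<le> N}. p ^ multiplicity p n)"
  proof (rule prod.mono_neutral_left[OF fin sub])
    show "\<forall>i\<in>{p. prime p \<and> p \<le> N} - prime_factors n. i ^ multiplicity i n = 1"
    proof
      fix i assume "i \<in> {p. prime p \<and> p \<le> N} - prime_factors n"
      then have "\<not> i dvd n" using assms by (auto simp: in_prime_factors_iff)
      then show "i ^ multiplicity i n = 1" by (simp add: not_dvd_imp_multiplicity_0)
    qed
  qed
  finally show ?thesis .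
qed

lemma mult_le_self:
  fixes p n :: nat
  assumes "prime p" "n \<ge> 1"
  shows "multiplicity p n \<le> n"
proof -
  have "p ^ multiplicity p n dvd n" by (rule multiplicity_dvd)
  then have "p ^ multiplicity p n \<le> n" using assms dvd_imp_le by auto
  moreover have "multiplicity p n < 2 ^ multiplicity p n" by (rule less_exp)
  moreover have "2 ^ multiplicity p n \<le> p ^ multiplicity p n"
    using prime_ge_2_nat[OF assms(1)] by (simp add: power_mono)
  ultimately show ?thesis by linarith
qed

lemma euler_ineq:
  fixes N :: nat
  shows "harm N \<le> (\<Prod>p\<in>{p. prime p \<and> p \<le> N}. (\<Sum>a\<in>{0..N}. (1 / real p) ^ a))"
proof -
  define Pr where "Pr = {p. prime p \<and> p \<le> N}"
  have fin: "finite Pr" unfolding Pr_def by simp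
  define F where "F n = restrict (\<lambda>p. multiplicity p n) Pr" for n :: nat
  have rep: "n = (\<Prod>p\<in>Pr. p ^ F n p)" if "n \<in> {1..N}" for n
    using nat_prod_pf[of n N] that unfolding Pr_def F_def by auto
  have inv: "inverse (real n) = (\<Prod>p\<in>Pr. (1 / real p) ^ F n p)" if "n \<in> {1..N}" for n
  proof -
    have "real n = (\<Prod>p\<in>Pr. real p ^ F n p)"
      by (subst rep[OF that]) (simp add: of_nat_prod)
    then have "inverse (real n) = (\<Prod>p\<in>Pr. inverse (real p ^ F n p))"
      by (simp add: prod_inversef[symmetric, unfolded comp_def])
    then show ?thesis by (simp add: power_one_over inverse_eq_divide)
  qed
  have injF: "inj_on F {1..N}"
  proof
    fix x y assume "x \<in> {1..N}" "y \<in> {1..N}" "F x = F y"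
    then show "x = y" using rep by metis
  qed
  have Fin: "F ` {1..N} \<subseteq> PiE Pr (\<lambda>_. {0..N})"
  proof
    fix g assume "g \<in> F ` {1..N}"
    then obtain n where n: "n \<in> {1..N}" "g = F n" by auto
    have "multiplicity p n \<le> N" if "p \<in> Pr" for p
      using mult_le_self[of p n] that n(1) unfolding Pr_def by auto
    then show "g \<in> PiE Pr (\<lambda>_. {0..N})" using n unfolding F_def by auto
  qed
  have "harm N = (\<Sum>n\<in>{1..N}. (\<Prod>p\<in>Pr. (1 / real p) ^ F n p))"
    unfolding harm_def using inv by (intro sum.cong) auto
  also have "\<dots> = (\<Sum>g\<in>F ` {1..N}. (\<Prod>p\<in>Pr. (1 / real p) ^ g p))"
    by (subst sum.reindex[OF injF]) simp
  also have "\<dots> \<le> (\<Sum>g\<in>PiE Pr (\<lambda>_. {0..N}). (\<Prod>p\<in>Pr. (1 / real p) ^ g p))"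
    by (rule sum_mono2[OF finite_PiE[OF fin] Fin]) (auto intro!: prod_nonneg)
  also have "\<dots> = (\<Prod>p\<in>Pr. (\<Sum>a\<in>{0..N}. (1 / real p) ^ a))"
    by (rule prod_sum_PiE[symmetric]) (auto simp: fin)
  finally show ?thesis unfolding Pr_def .
qed

lemma geom_bound:
  fixes p N :: nat
  assumes "p \<ge> 2"
  shows "(\<Sum>a\<in>{0..N}. (1 / real p) ^ a) \<le> exp (2 / real p)"
proof -
  have x1: "1 / real p < 1" "1 / real p \<ge> 0" "1/ real p \<noteq> 1" using assms by auto
  have "(\<Sum>a\<in>{0..N}. (1 / real p) ^ a) = (\<Sum>a<Suc N. (1 / real p) ^ a)"
    by (rule sum.cong) auto
  also have "\<dots> = (1 - (1 / real p) ^ Suc N) / (1 - 1 / real p)"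
    using sum_gp_strict[of "1 / real p" "Suc N"] x1 by simp
  also have "\<dots> \<le> 1 / (1 - 1 / real p)"
    using x1 by (intro divide_right_mono) auto
  also have "\<dots> = real p / (real p - 1)" using assms by (simp add: field_simps)
  also have "\<dots> \<le> 1 + 2 / real p" using assms by (simp add: field_simps)
  also have "\<dots> \<le> exp (2 / real p)" using exp_ge_add_one_self[of "2 / real p"] by simp
  finally show ?thesis .
qed

lemma prime_recip_ge:
  fixes N :: nat
  shows "harm N \<le> exp (2 * (\<Sum>p\<in>{p. prime p \<and> p \<le> N}. 1 / real p))"
proof -
  have fin: "finite {p. prime p \<and> p \<le> N}" by simp
  have "harm N \<le> (\<Prod>p\<in>{p. prime p \<and> p \<le> N}. exp (2 / real p))"
    using euler_ineq[of N]
    by (rule order.trans) (intro prod_mono conjI sum_nonneg geom_bound, auto simp: prime_ge_2_nat)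
  also have "\<dots> = exp (2 * (\<Sum>p\<in>{p. prime p \<and> p \<le> N}. 1 / real p))"
    by (simp add: exp_sum[OF fin, symmetric] sum_distrib_left)
  finally show ?thesis .
qed

lemma primes_diverge:
  fixes M0 :: nat and C :: real
  shows "\<exists>P. finite P \<and> (\<forall>p\<in>P. prime p \<and> M0 < p) \<and> (\<Sum>p\<in>P. 1 / real p) \<ge> C"
proof -
  define K where "K = 2 * (\<bar>C\<bar> + real M0)"
  define N where "N = nat \<lceil>exp (exp K)\<rceil>"
  have "real N \<ge> exp (exp K)" unfolding N_def by linarith
  then have "ln (real N + 1) \<ge> exp K"
    by (smt (verit) exp_gt_zero ln_exp ln_le_cancel_iff)
  then have "harm N \<ge> exp K" using harm_ge_ln[of N] by linarith
  then have "exp K \<le> exp (2 * (\<Sum>p\<in>{p. prime p \<and> p \<le> N}. 1 / real p))"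
    using prime_recip_ge[of N] by linarith
  then have "K \<le> 2 * (\<Sum>p\<in>{p. prime p \<and> p \<le> N}. 1 / real p)" by simp
  then have h: "(\<Sum>p\<in>{p. prime p \<and> p \<le> N}. 1 / real p) \<ge> \<bar>C\<bar> + real M0"
    unfolding K_def by simp
  define P where "P = {p. prime p \<and> p \<le> N} - {p. prime p \<and> p \<le> N} \<inter> {..M0}"
  have fin: "finite {p. prime p \<and> p \<le> N}" by simp
  have split: "(\<Sum>p\<in>{p. prime p \<and> p \<le> N}. 1 / real p) =
      (\<Sum>p\<in>P. 1 / real p) + (\<Sum>p\<in>{p. prime p \<and> p \<le> N} \<inter> {..M0}. 1 / real p)"
    unfolding P_def by (rule sum.subset_diff[OF Int_lower1 fin])
  define I where "I = {p. prime p \<and> p \<le> N} \<inter> {..M0}"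
  have "(\<Sum>p\<in>I. 1 / real p) \<le> (\<Sum>p\<in>I. 1)"
  proof (rule sum_mono)
    fix p assume "p \<in> I"
    then have "real p \<ge> 1" unfolding I_def using prime_ge_1_nat by auto
    then show "1 / real p \<le> 1" by simp
  qed
  also have "\<dots> = real (card I)" by simp
  also have "card I \<le> card {1..M0}"
    by (rule card_mono) (auto simp: I_def dest: prime_ge_1_nat)
  then have "real (card I) \<le> real M0" by simp
  finally have "(\<Sum>p\<in>{p. prime p \<and> p \<le> N} \<inter> {..M0}. 1 / real p) \<le> real M0" unfolding I_def .
  then have "(\<Sum>p\<in>P. 1 / real p) \<ge> C" using h split by linarith
  moreover have "finite P" unfolding P_def by simp
  moreover have "\<forall>p\<in>P. prime p \<and> M0 < p" unfolding P_def by auto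
  ultimately show ?thesis by blast
qed



definition cnt :: "nat set \<Rightarrow> nat \<Rightarrow> real" where
  "cnt P x = (\<Sum>p\<in>P. if p dvd x then 1 else 0)"

lemma card_multiples:
  fixes d n :: nat
  assumes "0 < d" "d dvd n"
  shows "card {x\<in>{0..<n}. d dvd x} = n div d"
proof -
  have "{x\<in>{0..<n}. d dvd x} = (\<lambda>i. d * i) ` {0..<n div d}"
  proof (intro set_eqI iffI)
    fix x assume "x \<in> {x\<in>{0..<n}. d dvd x}"
    then have "x < n" "d dvd x" by auto
    then obtain i where "x = d * i" unfolding dvd_def by blast
    have "d * (n div d) = n" using assms by simp
    then have "d * i < d * (n div d)" using \<open>x < n\<close> \<open>x = d * i\<close> by simp
    then have "i < n div d" using assms(1) nat_mult_less_cancel1 by blast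
    then show "x \<in> (\<lambda>i. d * i) ` {0..<n div d}" using \<open>x = d * i\<close> by auto
  next
    fix x assume "x \<in> (\<lambda>i. d * i) ` {0..<n div d}"
    then obtain i where i0: "i \<in> {0..<n div d}" "x = d * i" by blast
    then have i: "x = d * i" "i < n div d" by auto
    then have "d * i < d * (n div d)" using assms(1) nat_mult_less_cancel1 by blast
    also have "\<dots> = n" using assms by simp
    finally show "x \<in> {x\<in>{0..<n}. d dvd x}" using i by auto
  qed
  moreover have "inj_on (\<lambda>i. d * i) {0..<n div d}" using assms by (auto simp: inj_on_def)
  ultimately show ?thesis by (simp add: card_image)
qed

lemma sum_ind:
  fixes d n :: nat
  assumes "0 < d" "d dvd n"
  shows "(\<Sum>x\<in>{0..<n}. if d dvd x then 1 else 0 :: real) = real n / real d"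
proof -
  have "(\<Sum>x\<in>{0..<n}. if d dvd x then 1 else 0 :: real) = (\<Sum>x\<in>{x\<in>{0..<n}. d dvd x}. 1)"
    by (rule sum.inter_filter[symmetric]) simp
  also have "\<dots> = real (card {x\<in>{0..<n}. d dvd x})" by (rule sum_constant[THEN trans]) simp
  also have "\<dots> = real (n div d)" by (simp only: card_multiples[OF assms])
  also have "\<dots> = real n / real d" using assms by (simp add: real_of_nat_div)
  finally show ?thesis .
qed

locale cntsetup =
  fixes P :: "nat set" and n :: nat
  assumes finP: "finite P" and primeP: "\<And>p. p \<in> P \<Longrightarrow> prime p"
    and npos: "n > 0"
    and sqdvd: "\<And>p. p \<in> P \<Longrightarrow> p^2 dvd n"
    and pqdvd: "\<And>p q. p \<in> P \<Longrightarrow> q \<in> P \<Longrightarrow> p \<noteq> q \<Longrightarrow> p * q dvd n"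
begin

definition mu where "mu = (\<Sum>p\<in>P. 1 / real p)"

lemma pos: "p \<in> P \<Longrightarrow> 0 < p" using primeP prime_gt_0_nat by blast

lemma pdvd: "p \<in> P \<Longrightarrow> p dvd n"
  using sqdvd by (metis dvd_power dvd_trans zero_less_numeral)

lemma first_moment: "(\<Sum>x\<in>{0..<n}. cnt P x) = real n * mu"
proof -
  have "(\<Sum>x\<in>{0..<n}. cnt P x) = (\<Sum>p\<in>P. \<Sum>x\<in>{0..<n}. if p dvd x then 1 else 0)"
    unfolding cnt_def by (rule sum.swap)
  also have "\<dots> = (\<Sum>p\<in>P. real n / real p)"
    by (intro sum.cong refl sum_ind pos pdvd)
  also have "\<dots> = real n * mu" unfolding mu_def by (simp add: sum_distrib_left)
  finally show ?thesis .
qed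

lemma pair_bound:
  assumes "p \<in> P" "q \<in> P"
  shows "(\<Sum>x\<in>{0..<n}. (if p dvd x then 1 else 0) * (if q dvd x then 1 else (0::real)))
     \<le> real n / real p * (1 / real q) + (if p = q then real n / real p else 0)"
proof (cases "p = q")
  case True
  have "(\<Sum>x\<in>{0..<n}. (if p dvd x then 1 else 0) * (if q dvd x then 1 else (0::real)))
      = (\<Sum>x\<in>{0..<n}. if p dvd x then 1 else 0)" using True by (intro sum.cong) auto
  also have "\<dots> = real n / real p" using sum_ind pos pdvd assms by blast
  finally show ?thesis using True by (simp add: pos assms)
next
  case False
  have cop: "coprime p q" using False assms primeP by (simp add: primes_coprime)
  have "(\<Sum>x\<in>{0..<n}. (if p dvd x then 1 else 0) * (if q dvd x then 1 else (0::real)))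
      = (\<Sum>x\<in>{0..<n}. if p * q dvd x then 1 else 0)"
  proof (intro sum.cong refl)
    fix x
    have "p * q dvd x \<longleftrightarrow> p dvd x \<and> q dvd x"
    proof
      assume "p * q dvd x" then show "p dvd x \<and> q dvd x" by (meson dvd_mult_left dvd_mult_right)
    next
      assume "p dvd x \<and> q dvd x" then show "p * q dvd x" using cop divides_mult by blast
    qed
    then show "(if p dvd x then 1 else 0) * (if q dvd x then 1 else (0::real)) = (if p * q dvd x then 1 else 0)"
      by auto
  qed
  also have "\<dots> = real n / real (p * q)"
    using assms False by (intro sum_ind pqdvd) (auto simp: pos)
  finally show ?thesis using False by simp
qed

lemma second_moment: "(\<Sum>x\<in>{0..<n}. (cnt P x)^2) \<le> real n * mu^2 + real n * mu"
proof -
  define I where "I (p::nat) (x::nat) = (if p dvd x then 1 else (0::real))" for p x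
  have "(\<Sum>x\<in>{0..<n}. (cnt P x)^2) = (\<Sum>x\<in>{0..<n}. \<Sum>p\<in>P. \<Sum>q\<in>P. I p x * I q x)"
    unfolding cnt_def I_def power2_eq_square by (simp add: sum_product)
  also have "\<dots> = (\<Sum>p\<in>P. \<Sum>x\<in>{0..<n}. \<Sum>q\<in>P. I p x * I q x)"
    by (rule sum.swap)
  also have "\<dots> = (\<Sum>p\<in>P. \<Sum>q\<in>P. \<Sum>x\<in>{0..<n}. I p x * I q x)"
    by (intro sum.cong refl sum.swap)
  also have "\<dots> \<le> (\<Sum>p\<in>P. \<Sum>q\<in>P. real n / real p * (1 / real q) + (if p = q then real n / real p else 0))"
    unfolding I_def by (intro sum_mono pair_bound)
  also have "\<dots> = (\<Sum>p\<in>P. real n / real p * mu + real n / real p)"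
  proof (intro sum.cong refl)
    fix p assume p: "p \<in> P"
    have a: "(\<Sum>q\<in>P. real n / real p * (1 / real q) + (if p = q then real n / real p else 0))
       = (\<Sum>q\<in>P. real n / real p * (1 / real q)) + (\<Sum>q\<in>P. if p = q then real n / real p else 0)"
      by (rule sum.distrib)
    have b: "(\<Sum>q\<in>P. real n / real p * (1 / real q)) = real n / real p * mu"
      unfolding mu_def by (rule sum_distrib_left[symmetric])
    have c: "(\<Sum>q\<in>P. if p = q then real n / real p else 0) = real n / real p"
      using p finP by simp
    show "(\<Sum>q\<in>P. real n / real p * (1 / real q) + (if p = q then real n / real p else 0))
       = real n / real p * mu + real n / real p" by (simp only: a b c)
  qed
  also have "\<dots> = (\<Sum>p\<in>P. real n / real p) * mu + (\<Sum>p\<in>P. real n / real p)"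
    by (simp only: sum.distrib sum_distrib_right)
  also have "(\<Sum>p\<in>P. real n / real p) = real n * mu"
    unfolding mu_def by (simp add: sum_distrib_left)
  also have "real n * mu * mu + real n * mu = real n * mu^2 + real n * mu"
    by (simp add: power2_eq_square)
  finally show ?thesis .
qed

lemma variance: "(\<Sum>x\<in>{0..<n}. (cnt P x - mu)^2) \<le> real n * mu"
proof -
  have "(\<Sum>x\<in>{0..<n}. (cnt P x - mu)^2) =
      (\<Sum>x\<in>{0..<n}. (cnt P x)^2 - 2 * mu * cnt P x + mu^2)"
    by (intro sum.cong refl) (simp add: power2_eq_square algebra_simps)
  also have "\<dots> = (\<Sum>x\<in>{0..<n}. (cnt P x)^2) - 2 * mu * (\<Sum>x\<in>{0..<n}. cnt P x) + real n * mu^2"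
    by (simp add: sum.distrib sum_subtractf sum_distrib_left)
  also have "\<dots> \<le> real n * mu" using second_moment first_moment
    by (simp add: power2_eq_square algebra_simps)
  finally show ?thesis .
qed

lemma chebyshev:
  assumes "t > 0"
  shows "real (card {x\<in>{0..<n}. t < \<bar>cnt P x - mu\<bar>}) * t^2 \<le> real n * mu"
proof -
  let ?B = "{x\<in>{0..<n}. t < \<bar>cnt P x - mu\<bar>}"
  have "real (card ?B) * t^2 = (\<Sum>x\<in>?B. t^2)" by simp
  also have "\<dots> \<le> (\<Sum>x\<in>?B. (cnt P x - mu)^2)"
  proof (rule sum_mono)
    fix x assume "x \<in> ?B"
    then have "t \<le> \<bar>cnt P x - mu\<bar>" by auto
    then have "t^2 \<le> \<bar>cnt P x - mu\<bar>^2" using assms by (intro power_mono) auto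
    then show "t^2 \<le> (cnt P x - mu)^2" by simp
  qed
  also have "\<dots> \<le> (\<Sum>x\<in>{0..<n}. (cnt P x - mu)^2)"
    by (rule sum_mono2) auto
  also have "\<dots> \<le> real n * mu" by (rule variance)
  finally show ?thesis .
qed

lemma squares_count:
  "real (card {x\<in>{0..<n}. \<exists>p\<in>P. p^2 dvd x}) \<le> real n * (\<Sum>p\<in>P. 1 / (real p)^2)"
proof -
  have "{x\<in>{0..<n}. \<exists>p\<in>P. p^2 dvd x} = (\<Union>p\<in>P. {x\<in>{0..<n}. p^2 dvd x})" by auto
  then have "card {x\<in>{0..<n}. \<exists>p\<in>P. p^2 dvd x} \<le> (\<Sum>p\<in>P. card {x\<in>{0..<n}. p^2 dvd x})"
    using card_UN_le[OF finP] by simp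
  also have "\<dots> = (\<Sum>p\<in>P. n div p^2)"
    by (intro sum.cong refl card_multiples sqdvd) (auto simp: pos)
  finally have "real (card {x\<in>{0..<n}. \<exists>p\<in>P. p^2 dvd x}) \<le> real (\<Sum>p\<in>P. n div p^2)"
    by (simp only: of_nat_le_iff)
  also have "\<dots> = (\<Sum>p\<in>P. real (n div p^2))" by (rule of_nat_sum)
  also have "\<dots> = (\<Sum>p\<in>P. real n / (real p)^2)"
    by (intro sum.cong refl) (auto simp: real_of_nat_div sqdvd)
  also have "\<dots> = real n * (\<Sum>p\<in>P. 1 / (real p)^2)" by (simp add: sum_distrib_left)
  finally show ?thesis .
qed

end

lemma tele:
  fixes M :: nat
  assumes "M \<ge> 1"
  shows "(\<Sum>k\<in>{M<..M+i}. 1 / (real k)^2) \<le> 1 / real M - 1 / real (M + i)"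
proof (induction i)
  case 0 then show ?case by simp
next
  case (Suc i)
  have "{M<..M + Suc i} = insert (M + Suc i) {M<..M+i}" by auto
  then have "(\<Sum>k\<in>{M<..M+Suc i}. 1 / (real k)^2) = 1 / (real (M + Suc i))^2 + (\<Sum>k\<in>{M<..M+i}. 1 / (real k)^2)"
    by simp
  also have "\<dots> \<le> 1 / (real (M + Suc i))^2 + (1 / real M - 1 / real (M + i))" using Suc by simp
  also have "\<dots> \<le> 1 / real M - 1 / real (M + Suc i)"
  proof -
    define a where "a = real (M + i)"
    have a: "a \<ge> 1" using assms unfolding a_def by simp
    have e1: "1 / a - 1 / (a + 1) = 1 / (a * (a + 1))" using a by (simp add: field_simps)
    have "a * (a + 1) \<le> (a + 1) * (a + 1)" using a by (intro mult_right_mono) auto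
    then have "1 / (a + 1)^2 \<le> 1 / (a * (a + 1))" using a
      by (intro divide_left_mono) (auto simp: power2_eq_square)
    then have h: "1 / (a + 1)^2 \<le> 1 / a - 1 / (a + 1)" using e1 by simp
    have e2: "real (M + Suc i) = a + 1" "real (M + i) = a" unfolding a_def by simp_all
    show ?thesis unfolding e2 using h by linarith
  qed
  finally show ?case .
qed

lemma sq_recip_bound:
  fixes M :: nat and P :: "nat set"
  assumes "M \<ge> 1" "finite P" "\<forall>p\<in>P. M < p"
  shows "(\<Sum>p\<in>P. 1 / (real p)^2) \<le> 1 / real M"
proof -
  have sub: "P \<subseteq> {M<..M + \<Sum>P}"
  proof
    fix x assume x: "x \<in> P"
    have "x \<le> (\<Sum>p\<in>P. p)" using member_le_sum[of x P "\<lambda>p. p"] x assms by auto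
    then show "x \<in> {M<..M + \<Sum>P}" using x assms by auto
  qed
  have "(\<Sum>p\<in>P. 1 / (real p)^2) \<le> (\<Sum>k\<in>{M<..M+\<Sum>P}. 1 / (real k)^2)"
    by (rule sum_mono2[OF _ sub]) auto
  also have "\<dots> \<le> 1 / real M - 1 / real (M + \<Sum>P)" by (rule tele[OF assms(1)])
  also have "\<dots> \<le> 1 / real M" by (simp add: sum_nonneg)
  finally show ?thesis .
qed



lemma mult_prod_list:
  fixes p :: nat
  assumes "prime p" "\<forall>a\<in>set as. a \<noteq> 0"
  shows "prod_list as \<noteq> 0 \<and> multiplicity p (prod_list as) = sum_list (map (multiplicity p) as)"
  using assms(2)
proof (induction as)
  case Nil then show ?case by simp
next
  case (Cons a as)
  then have "a \<noteq> 0" "prod_list as \<noteq> 0" "multiplicity p (prod_list as) = sum_list (map (multiplicity p) as)"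
    by auto
  then show ?case using assms(1)
    by (simp add: prime_elem_multiplicity_mult_distrib)
qed

lemma sum_list_ub:
  fixes f :: "'b \<Rightarrow> 'a::linordered_semiring_1"
  assumes "\<forall>x\<in>set xs. f x \<le> c"
  shows "sum_list (map f xs) \<le> of_nat (length xs) * c"
  using assms by (induction xs) (auto simp: algebra_simps add_mono)

lemma sum_list_lb:
  fixes f :: "'b \<Rightarrow> 'a::linordered_semiring_1"
  assumes "\<forall>x\<in>set xs. c \<le> f x"
  shows "of_nat (length xs) * c \<le> sum_list (map f xs)"
  using assms by (induction xs) (auto simp: algebra_simps add_mono)

lemma sum_list_le_length:
  "(\<forall>x\<in>set xs. f x \<le> (1::nat)) \<Longrightarrow> sum_list (map f xs) \<le> length xs"
  by (induction xs) auto

lemma sum_sum_list: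
  "(\<Sum>p\<in>P. sum_list (map (h p) xs)) = sum_list (map (\<lambda>a. \<Sum>p\<in>P. h p a) xs)"
  by (induction xs) (auto simp: sum.distrib)

lemma mult_small:
  fixes p a :: nat
  assumes "prime p" "a \<noteq> 0" "\<not> p^2 dvd a"
  shows "multiplicity p a = (if p dvd a then 1 else 0)"
proof -
  have nu: "\<not> is_unit p" using assms(1) by auto
  have "\<not> 2 \<le> multiplicity p a" using assms power_dvd_iff_le_multiplicity[OF assms(2) nu, of 2] by simp
  moreover have "p dvd a \<longleftrightarrow> 1 \<le> multiplicity p a"
    using power_dvd_iff_le_multiplicity[OF assms(2) nu, of 1] by simp
  ultimately show ?thesis by auto
qed

lemma pf_main:
  fixes P S :: "nat set" and n m k j :: nat and mu \<delta> :: real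
  assumes finP: "finite P" and primeP: "\<forall>p\<in>P. prime p" and Pne: "P \<noteq> {}"
    and ndef: "n = (\<Prod>p\<in>P. p ^ m)"
    and Sdef: "\<forall>x\<in>S. (\<forall>p\<in>P. \<not> p^2 dvd x) \<and> \<bar>cnt P x - mu\<bar> \<le> \<delta> * mu"
    and mupos: "mu > 0" and \<delta>def: "\<delta> = 1 / (2 * real m + 2)"
    and kj: "0 < j" "j < k" "k + j \<le> m"
  shows "product_free n k j S"
  unfolding product_free_def
proof (intro allI impI notI)
  fix as bs :: "nat list"
  assume la: "length as = k" and lb: "length bs = j" and sa: "set as \<subseteq> S" and sb: "set bs \<subseteq> S"
    and eq: "prod_list as mod n = prod_list bs mod n"
  have nz: "x \<noteq> 0" if "x \<in> S" for x
  proof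
    assume "x = 0"
    obtain p where "p \<in> P" using Pne by auto
    then show False using Sdef that \<open>x = 0\<close> by auto
  qed
  have msm: "multiplicity p x = (if p dvd x then 1 else 0)" if "x \<in> S" "p \<in> P" for p x
    using mult_small[of p x] that nz Sdef primeP by auto
  have pmdvd: "p ^ m dvd n" if "p \<in> P" for p
    unfolding ndef by (rule dvd_prodI[OF finP that])
  have mp: "prod_list xs \<noteq> 0 \<and> multiplicity p (prod_list xs) = sum_list (map (multiplicity p) xs)
        \<and> multiplicity p (prod_list xs) \<le> length xs"
    if "set xs \<subseteq> S" "p \<in> P" for xs p
  proof -
    have "\<forall>a\<in>set xs. a \<noteq> 0" using that nz by auto
    note h = mult_prod_list[OF _ this, of p]
    have "sum_list (map (multiplicity p) xs) \<le> length xs"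
      by (rule sum_list_le_length) (use that msm in auto)
    then show ?thesis using h that primeP by auto
  qed
  have same: "multiplicity p (prod_list as) \<le> multiplicity p (prod_list bs)"
    if "set as \<subseteq> S" "set bs \<subseteq> S" "length as < m" "length bs < m"
       "prod_list as mod n = prod_list bs mod n" "p \<in> P" for as bs p
  proof -
    let ?e = "multiplicity p (prod_list as)"
    have e: "?e < m" using mp[OF that(1) that(6)] that(3) by simp
    have "p ^ ?e dvd n" using pmdvd[OF that(6)] e le_imp_power_dvd[of ?e m p]
      by (meson dvd_trans less_imp_le)
    moreover have "p ^ ?e dvd prod_list as" by (rule multiplicity_dvd)
    ultimately have "p ^ ?e dvd prod_list as mod n" by (simp add: dvd_mod_iff)
    then have "p ^ ?e dvd prod_list bs mod n" using that(5) by simp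
    then have "p ^ ?e dvd prod_list bs" using \<open>p ^ ?e dvd n\<close> by (simp add: dvd_mod_iff)
    moreover have "\<not> is_unit p" using primeP that(6) by auto
    ultimately show ?thesis using mp[OF that(2) that(6)]
      power_dvd_iff_le_multiplicity by blast
  qed
  have lm: "length as < m" "length bs < m" using la lb kj by auto
  have meq: "multiplicity p (prod_list as) = multiplicity p (prod_list bs)" if "p \<in> P" for p
    using same[OF sa sb lm eq that] same[OF sb sa lm(2) lm(1) eq[symmetric] that] by simp
  have T: "(\<Sum>p\<in>P. real (multiplicity p (prod_list xs))) = sum_list (map (cnt P) xs)"
    if "set xs \<subseteq> S" for xs
  proof -
    have "(\<Sum>p\<in>P. real (multiplicity p (prod_list xs))) =
        (\<Sum>p\<in>P. sum_list (map (\<lambda>a. real (multiplicity p a)) xs))"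
      using mp[OF that] by (intro sum.cong refl) (simp add: sum_list_of_nat[symmetric] o_def)
    also have "\<dots> = sum_list (map (\<lambda>a. \<Sum>p\<in>P. real (multiplicity p a)) xs)"
      by (rule sum_sum_list)
    also have "\<dots> = sum_list (map (cnt P) xs)"
      unfolding cnt_def using that msm by (intro arg_cong[where f=sum_list] map_cong refl sum.cong) auto
    finally show ?thesis .
  qed
  have E: "sum_list (map (cnt P) as) = sum_list (map (cnt P) bs)"
    using T[OF sa] T[OF sb] meq by simp
  have lbx: "\<forall>x\<in>set as. (1 - \<delta>) * mu \<le> cnt P x"
  proof
    fix x assume "x \<in> set as"
    then have "\<bar>cnt P x - mu\<bar> \<le> \<delta> * mu" using Sdef sa by auto
    then show "(1 - \<delta>) * mu \<le> cnt P x" by (simp add: abs_le_iff algebra_simps)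
  qed
  have ubx: "\<forall>x\<in>set bs. cnt P x \<le> (1 + \<delta>) * mu"
  proof
    fix x assume "x \<in> set bs"
    then have "\<bar>cnt P x - mu\<bar> \<le> \<delta> * mu" using Sdef sb by auto
    then show "cnt P x \<le> (1 + \<delta>) * mu" by (simp add: abs_le_iff algebra_simps)
  qed
  have "real k * ((1 - \<delta>) * mu) \<le> sum_list (map (cnt P) as)"
    using sum_list_lb[OF lbx] la by simp
  moreover have "sum_list (map (cnt P) bs) \<le> real j * ((1 + \<delta>) * mu)"
    using sum_list_ub[OF ubx] lb by simp
  moreover have "real j * ((1 + \<delta>) * mu) < real k * ((1 - \<delta>) * mu)"
  proof -
    have m1: "real m \<ge> 0" by simp
    have d0: "\<delta> \<ge> 0" unfolding \<delta>def by simp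
    have "real k + real j \<le> real m" using kj by linarith
    then have k1: "(real k + real j) * \<delta> \<le> real m * \<delta>" using d0 by (rule mult_right_mono)
    have k2: "real k - real j \<ge> 1" using kj by linarith
    have "real k - real j - (real k + real j) * \<delta> \<ge> 1 - real m * \<delta>"
      using k1 k2 by linarith
    moreover have "1 - real m * \<delta> > 0" unfolding \<delta>def by (simp add: field_simps)
    ultimately have "(real k - real j - (real k + real j) * \<delta>) * mu > 0"
      using mupos by simp
    then show ?thesis by (simp add: algebra_simps)
  qed
  ultimately show False using E by linarith
qed



theorem theorem3p1:
  fixes \<epsilon> :: real and m :: nat
  assumes "\<epsilon> > 0" and "m \<ge> 3"
  shows "\<exists>n::nat. n > 0 \<and> (\<exists>S. S \<subseteq> {0..<n} \<and> real (card S) \<ge> (1 - \<epsilon>) * real n \<and>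
           (\<forall>k j. 0 < j \<and> j < k \<and> k + j \<le> m \<longrightarrow> product_free n k j S))"
proof -
  have eps: "\<epsilon> > 0" by fact
  define M0 :: nat where "M0 = nat \<lceil>3 / \<epsilon>\<rceil> + 1"
  have M0a: "M0 \<ge> 1" unfolding M0_def by simp
  have M0b: "real M0 \<ge> 3 / \<epsilon>" unfolding M0_def by linarith
  have M0c: "1 / real M0 \<le> \<epsilon> / 3"
  proof -
    have "3 \<le> real M0 * \<epsilon>" using M0b eps by (simp add: pos_divide_le_eq)
    then show ?thesis using M0a eps by (simp add: field_simps)
  qed
  define \<delta> :: real where "\<delta> = 1 / (2 * real m + 2)"
  have dpos: "\<delta> > 0" unfolding \<delta>_def by simp
  define C where "C = 3 / (\<delta>^2 * \<epsilon>)"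
  have Cpos: "C > 0" unfolding C_def using dpos eps by simp
  obtain P where finP: "finite P" and Pp: "\<forall>p\<in>P. prime p \<and> M0 < p"
    and PC: "(\<Sum>p\<in>P. 1 / real p) \<ge> C"
    using primes_diverge[of M0 C] by blast
  have Pne: "P \<noteq> {}" using PC Cpos by auto
  have primeP: "\<And>p. p \<in> P \<Longrightarrow> prime p" using Pp by auto
  define n where "n = (\<Prod>p\<in>P. p ^ m)"
  have npos: "n > 0" unfolding n_def using primeP prime_gt_0_nat
    by (intro prod_pos) auto
  have pm: "p ^ m dvd n" if "p \<in> P" for p
    unfolding n_def by (rule dvd_prodI[OF finP that])
  have sq: "p^2 dvd n" if "p \<in> P" for p
  proof -
    have "p^2 dvd p^m" by (rule le_imp_power_dvd) (use assms(2) in simp)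
    then show ?thesis using pm[OF that] by (rule dvd_trans)
  qed
  have pq: "p * q dvd n" if "p \<in> P" "q \<in> P" "p \<noteq> q" for p q
  proof -
    have "(\<Prod>r\<in>{p,q}. r ^ m) dvd n" unfolding n_def
      by (rule prod_dvd_prod_subset[OF finP]) (use that in auto)
    then have "p ^ m * q ^ m dvd n" using that by simp
    moreover have "p * q dvd p ^ m * q ^ m" using assms(2)
      by (intro mult_dvd_mono) (auto intro: dvd_power)
    ultimately show ?thesis by (rule dvd_trans[rotated])
  qed
  interpret cs: cntsetup P n
    by unfold_locales (auto simp: finP primeP npos sq pq)
  have mupos: "cs.mu > 0" unfolding cs.mu_def using PC Cpos by linarith
  have muC: "cs.mu \<ge> C" unfolding cs.mu_def using PC by simp
  define S where "S = {x\<in>{0..<n}. (\<forall>p\<in>P. \<not> p^2 dvd x) \<and> \<bar>cnt P x - cs.mu\<bar> \<le> \<delta> * cs.mu}"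
  define Q where "Q = {x\<in>{0..<n}. \<exists>p\<in>P. p^2 dvd x}"
  define B where "B = {x\<in>{0..<n}. \<delta> * cs.mu < \<bar>cnt P x - cs.mu\<bar>}"
  have "{0..<n} \<subseteq> S \<union> Q \<union> B" unfolding S_def Q_def B_def by auto
  moreover have "finite (S \<union> Q \<union> B)" unfolding S_def Q_def B_def by auto
  ultimately have "card {0..<n} \<le> card (S \<union> Q \<union> B)" by (intro card_mono)
  then have "n \<le> card (S \<union> Q \<union> B)" by simp
  also have "\<dots> \<le> card S + card Q + card B"
    using card_Un_le[of "S \<union> Q" B] card_Un_le[of S Q] by linarith
  finally have cover: "real n \<le> real (card S) + real (card Q) + real (card B)" by linarith
  have cQ: "real (card Q) \<le> \<epsilon> / 3 * real n"
  proof -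
    have "real (card Q) \<le> real n * (\<Sum>p\<in>P. 1 / (real p)^2)"
      unfolding Q_def by (rule cs.squares_count)
    also have "\<dots> \<le> real n * (1 / real M0)"
      using sq_recip_bound[OF M0a finP] Pp by (intro mult_left_mono) auto
    also have "\<dots> \<le> real n * (\<epsilon> / 3)" using M0c by (intro mult_left_mono) auto
    also have "\<dots> = \<epsilon> / 3 * real n" by (rule mult.commute)
    finally show ?thesis .
  qed
  have cB: "real (card B) \<le> \<epsilon> / 3 * real n"
  proof -
    have cheb: "real (card B) * (\<delta> * cs.mu)^2 \<le> real n * cs.mu"
      unfolding B_def using dpos mupos by (intro cs.chebyshev) simp
    have "\<delta>^2 * cs.mu \<ge> \<delta>^2 * C" using muC dpos by (intro mult_left_mono) auto
    also have "\<delta>^2 * C = 3 / \<epsilon>" unfolding C_def using dpos eps by simp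
    finally have d2: "\<delta>^2 * cs.mu \<ge> 3 / \<epsilon>" .
    have "real (card B) * (3 / \<epsilon>) * cs.mu \<le> real (card B) * (\<delta>^2 * cs.mu) * cs.mu"
      using d2 mupos by (intro mult_right_mono mult_left_mono) auto
    also have "\<dots> = real (card B) * (\<delta> * cs.mu)^2" by (simp add: power2_eq_square)
    also have "\<dots> \<le> real n * cs.mu" by (rule cheb)
    finally have "(real (card B) * (3 / \<epsilon>)) * cs.mu \<le> real n * cs.mu" .
    then have "real (card B) * (3 / \<epsilon>) \<le> real n" using mupos by (rule mult_right_le_imp_le)
    then show ?thesis using eps by (simp add: field_simps)
  qed
  have dens: "real (card S) \<ge> (1 - \<epsilon>) * real n"
    using cover cQ cB eps by (simp add: algebra_simps)
  have pf: "product_free n k j S" if "0 < j \<and> j < k \<and> k + j \<le> m" for k j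
    by (rule pf_main[OF finP _ Pne n_def _ mupos \<delta>_def]) (use that primeP in \<open>auto simp: S_def\<close>)
  have "S \<subseteq> {0..<n}" unfolding S_def by auto
  then show ?thesis using npos dens pf by blast
qed


end
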